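(* Let $n\ge 6$ be even, and let $d_*=(\epsilon_1,\dots,\epsilon_{n-1},h)$ and $d_*'=(\epsilon_1',\dots,\epsilon_{n-1}',h')$ be neighbors with $d_*\ne d_*'$. Then for all $j_1,j_2$ with $1\le j_1\le j_2\le n-1$, \[\left|\sum_{j=j_1}^{j_2}(\epsilon'_j-\epsilon_j)\right|\le 2.\] Further, $|h-h'|\le 2$, or $|h|=\frac n2-1$ and $h'=-h$.
   Context: Symbols are $[1,n]$; $\mathrm{dist}(a,b)$ is the minimum of the residues of $a-b$ and $b-a$ mod $n$ (in $[0,n-1]$). A Latin row is a permutation $(s_1,\dots,s_n)$ of $[1,n]$. Its extended difference row is $(\epsilon_1,\dots,\epsilon_{n-1},h)$ where, with $h_j\in[0,n-1]$, $h_j\equiv s_{j+1}-s_j\pmod n$ ($1\le j\le n-1$), $h_n\equiv s_1-s_n\pmod n$, one sets $\epsilon_j=h_j-\frac n2$, $h=h_n-\frac n2$ (integers). A Latin rectangle is a matrix over $[1,n]$ with no repeats in any row or column; its inner distance is the minimum of $\mathrm{dist}$ over symbols in horizontally or vertically adjacent cells. Two extended difference rows of Latin rows of inner distance $\frac n2-1$ (inner distance of a row being $\min_j\mathrm{dist}(s_j,s_{j+1})$) are neighbors if there exist Latin rows $r,r'$ with these extended difference rows such that the $2\times n$ matrix with rows $r$ and $r'$ is a Latin rectangle of inner distance $\frac n2-1$. *)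

theory Defs
  imports Main
begin

definition cdist :: "nat \<Rightarrow> int \<Rightarrow> int \<Rightarrow> int" where
  "cdist n a b = min ((a - b) mod int n) ((b - a) mod int n)"

definition latin_row :: "nat \<Rightarrow> (nat \<Rightarrow> int) \<Rightarrow> bool" where
  "latin_row n s \<longleftrightarrow> bij_betw s {1..n} {1..int n}"

definition row_inner_dist :: "nat \<Rightarrow> (nat \<Rightarrow> int) \<Rightarrow> int" where
  "row_inner_dist n s = Min ((\<lambda>j. cdist n (s j) (s (j+1))) ` {1..n-1})"

text \<open>Extended difference row (eps_1, ..., eps_{n-1}, h) as a list of length n:
  entry j-1 is eps_j for 1 <= j <= n-1, and entry n-1 is h.\<close>
definition ext_diff_row :: "nat \<Rightarrow> (nat \<Rightarrow> int) \<Rightarrow> int list" where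
  "ext_diff_row n s =
     map (\<lambda>j. (s (j+1) - s j) mod int n - int n div 2) [1..<n]
     @ [(s 1 - s n) mod int n - int n div 2]"

definition rect2_inner_dist :: "nat \<Rightarrow> (nat \<Rightarrow> int) \<Rightarrow> (nat \<Rightarrow> int) \<Rightarrow> int" where
  "rect2_inner_dist n r r' =
     Min ((\<lambda>j. cdist n (r j) (r (j+1))) ` {1..n-1}
        \<union> (\<lambda>j. cdist n (r' j) (r' (j+1))) ` {1..n-1}
        \<union> (\<lambda>j. cdist n (r j) (r' j)) ` {1..n})"

definition latin_rect2 :: "nat \<Rightarrow> (nat \<Rightarrow> int) \<Rightarrow> (nat \<Rightarrow> int) \<Rightarrow> bool" where
  "latin_rect2 n r r' \<longleftrightarrow> latin_row n r \<and> latin_row n r' \<and> (\<forall>j\<in>{1..n}. r j \<noteq> r' j)"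

definition admissible_diff_row :: "nat \<Rightarrow> int list \<Rightarrow> bool" where
  "admissible_diff_row n d \<longleftrightarrow>
     (\<exists>s. latin_row n s \<and> row_inner_dist n s = int n div 2 - 1 \<and> ext_diff_row n s = d)"

definition neighbors :: "nat \<Rightarrow> int list \<Rightarrow> int list \<Rightarrow> bool" where
  "neighbors n d d' \<longleftrightarrow> admissible_diff_row n d \<and> admissible_diff_row n d' \<and>
     (\<exists>r r'. latin_rect2 n r r' \<and> ext_diff_row n r = d \<and> ext_diff_row n r' = d'
        \<and> rect2_inner_dist n r r' = int n div 2 - 1)"

end

theory Submission
  imports Defs
begin

lemma cdist_bound:
  assumes "cdist n a b \<ge> int n div 2 - 1" "even n" "n \<ge> 6"
  shows "int n div 2 - 1 \<le> (b - a) mod int n \<and> (b - a) mod int n \<le> int n div 2 + 1"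
proof -
  define x where "x = (b - a) mod int n"
  have x0: "0 \<le> x" "x < int n" using assms(3) by (auto simp: x_def)
  have "(a - b) mod int n = (- (b - a)) mod int n" by simp
  also have "\<dots> = (if x = 0 then 0 else int n - x)"
    unfolding x_def by (rule zmod_zminus1_eq_if)
  finally have ab: "(a - b) mod int n = (if x = 0 then 0 else int n - x)" .
  have c: "min (if x = 0 then 0 else int n - x) x \<ge> int n div 2 - 1"
    using assms(1) ab unfolding cdist_def x_def[symmetric] by simp
  obtain m where m: "n = 2 * m" using assms(2) by blast
  have "int n div 2 = int m" using m by simp
  then show ?thesis using c x0 m assms(3) unfolding x_def[symmetric]
    by (auto split: if_splits)
qed

lemma eq_of_mod:
  fixes a b N :: int
  assumes "a mod N = b mod N" "\<bar>a - b\<bar> < N"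
  shows "a = b"
proof -
  have "N dvd (a - b)" using assms(1) by (simp add: mod_eq_dvd_iff)
  then obtain k where k: "a - b = N * k" by blast
  have "N > 0" using assms(2) by linarith
  have "k = 0"
  proof (rule ccontr)
    assume "k \<noteq> 0"
    then have "N * 1 \<le> N * \<bar>k\<bar>" using \<open>N > 0\<close> by (intro mult_left_mono) auto
    then have "\<bar>N * k\<bar> \<ge> N" using \<open>N > 0\<close> by (simp add: abs_mult)
    then show False using k assms(2) by simp
  qed
  then show ?thesis using k by simp
qed

lemma mod_cases3:
  fixes a b N :: int
  assumes "a mod N = b mod N" "\<bar>a - b\<bar> \<le> N" "N > 0"
  shows "a = b \<or> a = b + N \<or> a = b - N"
proof -
  have "N dvd (a - b)" using assms(1) by (simp add: mod_eq_dvd_iff)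
  then obtain k where k: "a - b = N * k" by blast
  have "\<bar>k\<bar> \<le> 1"
  proof (rule ccontr)
    assume "\<not> \<bar>k\<bar> \<le> 1"
    then have "\<bar>k\<bar> \<ge> 2" by simp
    then have "N * 2 \<le> N * \<bar>k\<bar>" using assms(3) by (intro mult_left_mono) auto
    then have "\<bar>N * k\<bar> \<ge> 2 * N" using assms(3) by (simp add: abs_mult)
    then show False using k assms(2,3) by simp
  qed
  then have "k = 0 \<or> k = 1 \<or> k = -1" by auto
  then show ?thesis using k by auto
qed

lemma ext_nth:
  assumes "1 \<le> j" "j \<le> n - 1"
  shows "ext_diff_row n s ! (j - 1) = (s (j+1) - s j) mod int n - int n div 2"
  using assms by (simp add: ext_diff_row_def nth_append)

lemma ext_last:
  assumes "n \<ge> 1"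
  shows "ext_diff_row n s ! (n - 1) = (s 1 - s n) mod int n - int n div 2"
  using assms by (simp add: ext_diff_row_def nth_append)

theorem mainTheorem16:
  fixes n :: nat and d d' :: "int list"
  assumes "n \<ge> 6" and "even n"
    and "neighbors n d d'" and "d \<noteq> d'"
  shows "(\<forall>j1 j2. 1 \<le> j1 \<and> j1 \<le> j2 \<and> j2 \<le> n - 1 \<longrightarrow>
            \<bar>\<Sum>j = j1..j2. (d' ! (j - 1) - d ! (j - 1))\<bar> \<le> 2)
       \<and> (\<bar>d ! (n - 1) - d' ! (n - 1)\<bar> \<le> 2
          \<or> (\<bar>d ! (n - 1)\<bar> = int n div 2 - 1 \<and> d' ! (n - 1) = - (d ! (n - 1))))"
proof -
  obtain r r' where rr: "latin_rect2 n r r'" "ext_diff_row n r = d" "ext_diff_row n r' = d'"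
    "rect2_inner_dist n r r' = int n div 2 - 1"
    using assms(3) unfolding neighbors_def by blast
  define N where "N = int n"
  define m where "m = int n div 2"
  obtain k where nk: "n = 2 * k" using assms(2) by blast
  have mN: "N = 2 * m" using nk by (simp add: N_def m_def)
  have N6: "N \<ge> 6" using assms(1) by (simp add: N_def)
  let ?S = "(\<lambda>j. cdist n (r j) (r (j+1))) ` {1..n-1}
        \<union> (\<lambda>j. cdist n (r' j) (r' (j+1))) ` {1..n-1}
        \<union> (\<lambda>j. cdist n (r j) (r' j)) ` {1..n}"
  have fin: "finite ?S" by simp
  have ge: "x \<ge> m - 1" if "x \<in> ?S" for x
  proof -
    have "Min ?S \<le> x" using fin that by (rule Min_le)
    then show ?thesis using rr(4) unfolding rect2_inner_dist_def m_def by simp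
  qed
  have hr: "m - 1 \<le> (r (j+1) - r j) mod N \<and> (r (j+1) - r j) mod N \<le> m + 1"
    if "j \<in> {1..n-1}" for j
    using cdist_bound[OF _ assms(2,1), of "r j" "r (j+1)"] ge that
    unfolding m_def N_def by blast
  have hr': "m - 1 \<le> (r' (j+1) - r' j) mod N \<and> (r' (j+1) - r' j) mod N \<le> m + 1"
    if "j \<in> {1..n-1}" for j
    using cdist_bound[OF _ assms(2,1), of "r' j" "r' (j+1)"] ge that
    unfolding m_def N_def by blast
  define \<delta> where "\<delta> j = (r' j - r j) mod N" for j
  have hd: "m - 1 \<le> \<delta> j \<and> \<delta> j \<le> m + 1" if "j \<in> {1..n}" for j
    using cdist_bound[OF _ assms(2,1), of "r j" "r' j"] ge that
    unfolding m_def N_def \<delta>_def by blast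
  have key: "d' ! (j - 1) - d ! (j - 1) = \<delta> (Suc j) - \<delta> j" if j: "1 \<le> j" "j \<le> n - 1" for j
  proof -
    have e: "d' ! (j - 1) - d ! (j - 1) = (r' (j+1) - r' j) mod N - (r (j+1) - r j) mod N"
      using ext_nth[OF j, of r] ext_nth[OF j, of r'] rr(2,3) by (simp add: N_def)
    have "((r' (j+1) - r' j) mod N - (r (j+1) - r j) mod N) mod N
        = ((r' (j+1) - r' j) - (r (j+1) - r j)) mod N" by (simp add: mod_diff_eq)
    also have "\<dots> = ((r' (j+1) - r (j+1)) - (r' j - r j)) mod N" by (simp add: algebra_simps)
    also have "\<dots> = (\<delta> (Suc j) - \<delta> j) mod N" by (simp add: \<delta>_def mod_diff_eq)
    finally have c: "((r' (j+1) - r' j) mod N - (r (j+1) - r j) mod N) mod N = (\<delta> (Suc j) - \<delta> j) mod N" .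
    have b1: "m - 1 \<le> \<delta> (Suc j) \<and> \<delta> (Suc j) \<le> m + 1" using hd[of "Suc j"] j assms(1) by auto
    have b2: "m - 1 \<le> \<delta> j \<and> \<delta> j \<le> m + 1" using hd[of j] j by auto
    have "(r' (j+1) - r' j) mod N - (r (j+1) - r j) mod N = \<delta> (Suc j) - \<delta> j"
      apply (rule eq_of_mod[OF c])
      using hr[of j] hr'[of j] b1 b2 j N6 by auto
    then show ?thesis using e by simp
  qed
  have part1: "\<bar>\<Sum>j = j1..j2. (d' ! (j - 1) - d ! (j - 1))\<bar> \<le> 2"
    if "1 \<le> j1" "j1 \<le> j2" "j2 \<le> n - 1" for j1 j2
  proof -
    have "(\<Sum>j = j1..j2. (d' ! (j - 1) - d ! (j - 1))) = (\<Sum>j = j1..j2. \<delta> (Suc j) - \<delta> j)"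
      by (rule sum.cong) (use key that in auto)
    also have "\<dots> = \<delta> (Suc j2) - \<delta> j1" by (rule sum_Suc_diff) (use that in simp)
    moreover have "Suc j2 \<in> {1..n}" "j1 \<in> {1..n}" using that assms(1) by auto
    ultimately show ?thesis using hd[of "Suc j2"] hd[of j1] by auto
  qed
  have lat: "latin_row n r" "latin_row n r'" using rr(1) unfolding latin_rect2_def by auto
  have hbound: "m - (m - 1) \<le> (s 1 - s n) mod N \<and> (s 1 - s n) mod N \<le> N - 1"
    if "latin_row n s" for s
  proof -
    have inj: "inj_on s {1..n}" and im: "s ` {1..n} = {1..int n}"
      using that unfolding latin_row_def bij_betw_def by auto
    have i1: "1 \<in> {1..n}" and i2: "n \<in> {1..n}" and i3: "1 \<noteq> n" using assms(1) by auto
    have s1n: "s 1 \<noteq> s n" using inj_onD[OF inj _ i1 i2] i3 by blast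
    have "s 1 \<in> s ` {1..n}" using i1 by (rule imageI)
    then have a1: "s 1 \<in> {1..N}" using im by (simp add: N_def)
    have "s n \<in> s ` {1..n}" using i2 by (rule imageI)
    then have a2: "s n \<in> {1..N}" using im by (simp add: N_def)
    have "(s 1 - s n) mod N \<noteq> 0"
    proof
      assume z: "(s 1 - s n) mod N = 0"
      have "s 1 - s n = 0"
        by (rule eq_of_mod) (use z a1 a2 in auto)
      then show False using s1n by simp
    qed
    moreover have "(s 1 - s n) mod N \<ge> 0" "(s 1 - s n) mod N < N" using N6 by auto
    ultimately show ?thesis by simp
  qed
  define h where "h = (r 1 - r n) mod N - m"
  define h' where "h' = (r' 1 - r' n) mod N - m"
  have dh: "d ! (n - 1) = h" "d' ! (n - 1) = h'"
    using ext_last[of n r] ext_last[of n r'] rr(2,3) assms(1) by (auto simp: h_def h'_def N_def m_def)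
  have hb: "1 - m \<le> h \<and> h \<le> m - 1" "1 - m \<le> h' \<and> h' \<le> m - 1"
    using hbound[OF lat(1)] hbound[OF lat(2)] mN by (auto simp: h_def h'_def)
  have "(h' - h) mod N = (\<delta> 1 - \<delta> n) mod N"
  proof -
    have "(h' - h) mod N = ((r' 1 - r' n) mod N - (r 1 - r n) mod N) mod N" by (simp add: h_def h'_def)
    also have "\<dots> = ((r' 1 - r' n) - (r 1 - r n)) mod N" by (simp add: mod_diff_eq)
    also have "\<dots> = ((r' 1 - r 1) - (r' n - r n)) mod N" by (simp add: algebra_simps)
    also have "\<dots> = (\<delta> 1 - \<delta> n) mod N" by (simp add: \<delta>_def mod_diff_eq)
    finally show ?thesis .
  qed
  moreover have b1: "m - 1 \<le> \<delta> 1" "\<delta> 1 \<le> m + 1" and b2: "m - 1 \<le> \<delta> n" "\<delta> n \<le> m + 1"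
    using hd[of 1] hd[of n] assms(1) by auto
  moreover have hb1: "1 - m \<le> h" "h \<le> m - 1" and hb2: "1 - m \<le> h'" "h' \<le> m - 1" using hb by auto
  moreover have "\<bar>(h' - h) - (\<delta> 1 - \<delta> n)\<bar> \<le> N" using b1 b2 hb1 hb2 mN by linarith
  moreover have "N > 0" using N6 by linarith
  ultimately have "h' - h = \<delta> 1 - \<delta> n \<or> h' - h = \<delta> 1 - \<delta> n + N \<or> h' - h = \<delta> 1 - \<delta> n - N"
    by (intro mod_cases3)
  then have part2: "\<bar>h - h'\<bar> \<le> 2 \<or> (\<bar>h\<bar> = m - 1 \<and> h' = - h)"
  proof (elim disjE)
    assume "h' - h = \<delta> 1 - \<delta> n" then show ?thesis using b1 b2 by linarith
  next
    assume "h' - h = \<delta> 1 - \<delta> n + N"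
    then have "h = 1 - m" "h' = m - 1" using b1 b2 hb1 hb2 mN by linarith+
    then show ?thesis using N6 mN by simp
  next
    assume "h' - h = \<delta> 1 - \<delta> n - N"
    then have "h = m - 1" "h' = 1 - m" using b1 b2 hb1 hb2 mN by linarith+
    then show ?thesis using N6 mN by simp
  qed
  show ?thesis using part1 part2 dh by (auto simp: m_def)
qed

end
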